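(* Let $C=C_{9,1}$ be the Clifford system of rank $10$ on $\mathbb{R}^{32}$. Then the Clifford foliation $(\mathbb{S}^{31},\mathcal{F}_C)$ is not homogeneous.
   Context: A Clifford system $C$ of rank $m+1$ on $\mathbb{R}^{2l}$, with the standard inner product, is an $(m+1)$-dimensional linear subspace $\mathbb{R}_C$ of the symmetric endomorphisms of $\mathbb{R}^{2l}$. It must admit a basis $P_0,\dots,P_m$ with $P_i^2=\mathrm{Id}$ and $P_iP_j=-P_jP_i$ for $i\ne j$. For $m=9$ and $l=16$ such a system exists and is unique up to conjugation by $O(32)$; it is denoted $C_{9,1}$. The map $\pi_C$ is $\pi_C(x)=\sum_i\langle P_ix,x\rangle P_i$ on $\mathbb{S}^{2l-1}$, and $\mathcal{F}_C$ is the partition into fibers of $\pi_C$. Homogeneous means the leaves are the orbits of an isometric action of a connected Lie group. *)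

theory Defs
  imports "HOL-Analysis.Analysis"
begin

text \<open>A Clifford system of rank m+1 on R^n, given by a basis P 0, ..., P m of
  symmetric matrices with P_i^2 = Id and P_i P_j = - P_j P_i for i different from j.\<close>
definition clifford_system :: "nat \<Rightarrow> (nat \<Rightarrow> real^'n^'n) \<Rightarrow> bool" where
  "clifford_system m P \<longleftrightarrow>
     (\<forall>i\<le>m. transpose (P i) = P i \<and> P i ** P i = mat 1) \<and>
     (\<forall>i\<le>m. \<forall>j\<le>m. i \<noteq> j \<longrightarrow> P i ** P j = - (P j ** P i))"

definition clifford_map :: "nat \<Rightarrow> (nat \<Rightarrow> real^'n^'n) \<Rightarrow> real^'n \<Rightarrow> real^'n^'n" where
  "clifford_map m P x = (\<Sum>i\<le>m. ((P i *v x) \<bullet> x) *\<^sub>R P i)"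

definition clifford_leaf :: "nat \<Rightarrow> (nat \<Rightarrow> real^'n^'n) \<Rightarrow> real^'n \<Rightarrow> (real^'n) set" where
  "clifford_leaf m P x = {y \<in> sphere 0 1. clifford_map m P y = clifford_map m P x}"

text \<open>A foliation of the unit sphere (given by its leaf map) is homogeneous if its
  leaves are the orbits of an isometric action of a connected Lie group.  Such an
  action factors through a path-connected subgroup of O(n) (the image), and
  conversely every path-connected subgroup of O(n) is a connected Lie subgroup
  (Yamabe); so we quantify over path-connected subgroups H of O(n).\<close>
definition homogeneous_foliation :: "(real^'n \<Rightarrow> (real^'n) set) \<Rightarrow> bool" where
  "homogeneous_foliation leaf \<longleftrightarrow>
     (\<exists>H :: (real^'n^'n) set.
        H \<subseteq> {Q. orthogonal_matrix Q} \<and> mat 1 \<in> H \<and>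
        (\<forall>A\<in>H. \<forall>B\<in>H. A ** B \<in> H) \<and> (\<forall>A\<in>H. transpose A \<in> H) \<and>
        path_connected H \<and>
        (\<forall>x\<in>sphere 0 1. (\<lambda>A. A *v x) ` H = leaf x))"

end

theory Submission imports Defs begin

lemma trace_scaleR: "trace (c *\<^sub>R (A::real^'n^'n)) = c * trace A"
  by (simp add: trace_def sum_distrib_left)

lemma matrix_add_rdistrib: "((A::real^'n^'m) + B) ** C = A ** C + B ** C"
  by (simp add: matrix_matrix_mult_def vec_eq_iff sum.distrib distrib_right)

lemma transpose_diff: "transpose ((A::real^'n^'m) - B) = transpose A - transpose B"
  by (simp add: transpose_def vec_eq_iff)

lemma transpose_add: "transpose ((A::real^'n^'m) + B) = transpose A + transpose B"
  by (simp add: transpose_def vec_eq_iff)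

lemma trace_sum: "trace (sum f S) = (\<Sum>i\<in>S. trace (f i :: real^'n^'n))"
  by (simp add: trace_def sum.swap[of _ S])

lemma matrix_sum_ldistrib: "(A::real^'n^'m) ** sum f S = (\<Sum>i\<in>S. A ** f i)"
proof (induction S rule: infinite_finite_induct)
  case (insert x F) then show ?case by (simp add: matrix_add_ldistrib)
qed simp_all

lemma inner_mat_left: "((A::real^'n^'n) *v x) \<bullet> y = x \<bullet> (transpose A *v y)"
  by (metis dot_lmul_matrix inner_commute transpose_matrix_vector)

lemma c32: "trace (mat 1 :: real^32^32) = 32"
  by (simp add: trace_I)



lemma mm_scaleR_left: "(c *\<^sub>R (A::real^'n^'m)) ** (B::real^'p^'n) = c *\<^sub>R (A ** B)"
  by (simp add: scalar_matrix_assoc)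
lemma mm_scaleR_right: "(A::real^'n^'m) ** (c *\<^sub>R (B::real^'p^'n)) = c *\<^sub>R (A ** B)"
  by (simp add: matrix_scalar_ac scalar_matrix_assoc)
lemma mm_neg_left: "(- (A::real^'n^'m)) ** (B::real^'p^'n) = - (A ** B)"
  using mm_scaleR_left[of "-1" A B] by (simp add: scaleR_minus1_left)
lemma mm_neg_right: "(A::real^'n^'m) ** (- (B::real^'p^'n)) = - (A ** B)"
  using mm_scaleR_right[of A "-1" B] by (simp add: scaleR_minus1_left)
lemma trace_neg: "trace (- (A::real^'n^'n)) = - trace A"
  using trace_scaleR[of "-1" A] by (simp add: scaleR_minus1_left)
lemmas mass = matrix_mul_assoc[symmetric]
lemmas mnorm = mass mm_scaleR_left mm_scaleR_right mm_neg_left mm_neg_right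

primrec wp :: "(nat \<Rightarrow> real^32^32) \<Rightarrow> nat list \<Rightarrow> real^32^32" where
  "wp P [] = mat 1"
| "wp P (i # w) = P i ** wp P w"

definition sc :: "nat \<Rightarrow> nat list \<Rightarrow> real" where
  "sc i w = (-1) ^ length (filter (\<lambda>j. j \<noteq> i) w)"

lemma sc_sq: "sc i w * sc i w = 1"
  by (simp add: sc_def power_mult_distrib[symmetric])

lemma wp_append: "wp P (u @ v) = wp P u ** wp P v"
  by (induction u) (simp_all add: mass)


definition tau :: "nat list \<Rightarrow> nat list \<Rightarrow> real" where
  "tau u v = prod_list (map (\<lambda>i. sc i v) u)"

primrec sig :: "nat list \<Rightarrow> real" where
  "sig [] = 1"
| "sig (i # w) = sig w * sc i w"


definition Ep :: "(nat \<Rightarrow> real^32^32) \<Rightarrow> nat list \<Rightarrow> real^32^32" where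
  "Ep P q = (1/2) *\<^sub>R (mat 1 + wp P q)"

primrec Prd :: "(nat \<Rightarrow> real^32^32) \<Rightarrow> nat list list \<Rightarrow> real^32^32" where
  "Prd P [] = mat 1"
| "Prd P (q # qs) = Ep P q ** Prd P qs"

primrec Tr :: "nat list list \<Rightarrow> nat list \<Rightarrow> real" where
  "Tr [] w = (if w = [] then 32 else 0)"
| "Tr (q # qs) w = (Tr qs w + Tr qs (w @ q)) / 2"

definition good :: "nat list \<Rightarrow> bool" where
  "good w = (w = [] \<or> list_ex (\<lambda>i. odd (length (filter (\<lambda>j. j \<noteq> i) w))) [0,1,2,3,4,5,6,7,8,9])"

primrec AG :: "nat list list \<Rightarrow> nat list \<Rightarrow> bool" where
  "AG [] w = (good w \<and> set w \<subseteq> {..9})"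
| "AG (q # qs) w = (AG qs w \<and> AG qs (w @ q))"

definition qs0 :: "nat list list" where
  "qs0 = [[0],[1,2,3,4],[1,2,5,6],[1,3,5,7],[1,2,7,8]]"

lemma qs0_AG: "AG qs0 []" by (simp add: qs0_def good_def)
lemma qs0_Tr: "Tr qs0 [] = 1" by (simp add: qs0_def)
lemma qs0_sig: "\<forall>q\<in>set qs0. set q \<subseteq> {..9} \<and> sig q = 1" by (simp add: qs0_def sc_def)
lemma qs0_tau: "\<forall>q\<in>set qs0. \<forall>q'\<in>set qs0. tau q q' = 1" by (simp add: qs0_def tau_def sc_def)


lemma mv_neg: "(- (A::real^'n^'m)) *v x = - (A *v x)"
  by (simp add: matrix_vector_mult_def vec_eq_iff sum_negf)

lemma quad_zero:
  fixes M :: "real^'n^'n"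
  assumes sym: "transpose M = M" and q: "\<And>x. (M *v x) \<bullet> x = 0"
  shows "M = 0"
proof -
  have "(M *v x) \<bullet> y = 0" for x y
  proof -
    have "0 = (M *v (x + y)) \<bullet> (x + y)" using q by simp
    also have "\<dots> = (M *v x) \<bullet> x + (M *v x) \<bullet> y + (M *v y) \<bullet> x + (M *v y) \<bullet> y"
      by (simp add: matrix_vector_right_distrib inner_add_left inner_add_right)
    also have "(M *v y) \<bullet> x = (M *v x) \<bullet> y"
      using inner_mat_left[of M y x] sym by (simp add: inner_commute)
    finally show ?thesis using q by simp
  qed
  then have "M *v x = 0" for x by (metis inner_eq_zero_iff)
  then show ?thesis by (simp add: matrix_eq)
qed

lemma bessel2:
  fixes r x y :: "real^'n"
  assumes "x \<bullet> x = 1" "y \<bullet> y = 1" "x \<bullet> y = 0"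
  shows "(r \<bullet> x)^2 + (r \<bullet> y)^2 \<le> r \<bullet> r"
proof -
  define a where "a = r \<bullet> x"
  define b where "b = r \<bullet> y"
  have "0 \<le> (r - a *\<^sub>R x - b *\<^sub>R y) \<bullet> (r - a *\<^sub>R x - b *\<^sub>R y)"
    by simp
  also have "\<dots> = r \<bullet> r - 2*a*(r \<bullet> x) - 2*b*(r \<bullet> y) + a*a*(x \<bullet> x) + 2*a*b*(x \<bullet> y) + b*b*(y \<bullet> y)"
    by (simp add: inner_diff_left inner_diff_right inner_commute[of x r] inner_commute[of y r] inner_commute[of y x] algebra_simps)
  also have "\<dots> = r \<bullet> r - a^2 - b^2"
    using assms by (simp add: a_def b_def power2_eq_square)
  finally show ?thesis by (simp add: a_def b_def)
qed

lemma trace_ge2: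
  fixes Q :: "real^'n^'n"
  assumes sym: "transpose Q = Q" and idem: "Q ** Q = Q"
    and qx: "Q *v x = x" and qy: "Q *v y = y"
    and o: "x \<bullet> x = 1" "y \<bullet> y = 1" "x \<bullet> y = 0"
  shows "2 \<le> trace Q"
proof -
  have k: "(x$k)^2 + (y$k)^2 \<le> Q$k$k" for k
  proof -
    have "Q$k$k = (Q ** Q)$k$k" using idem by simp
    also have "\<dots> = (\<Sum>j\<in>UNIV. Q$k$j * Q$j$k)" by (simp add: matrix_matrix_mult_def)
    also have "\<dots> = Q$k \<bullet> Q$k"
    proof -
      have "Q$j$k = Q$k$j" for j using sym by (metis transpose_def vec_lambda_beta)
      then show ?thesis by (simp add: inner_vec_def)
    qed
    finally have "Q$k$k = Q$k \<bullet> Q$k" .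
    moreover have "Q$k \<bullet> x = x$k" "Q$k \<bullet> y = y$k"
      using qx qy by (metis matrix_vector_mul_component)+
    ultimately show ?thesis using bessel2[OF o, of "Q$k"] by simp
  qed
  have "2 = (\<Sum>k\<in>UNIV. (x$k)^2 + (y$k)^2)"
    using o by (simp add: sum.distrib inner_vec_def power2_eq_square)
  also have "\<dots> \<le> (\<Sum>k\<in>UNIV. Q$k$k)" by (rule sum_mono) (rule k)
  finally show ?thesis by (simp add: trace_def)
qed

locale cs =
  fixes P :: "nat \<Rightarrow> real^32^32"
  assumes cs: "clifford_system 9 P"
begin

lemma Psym: "i \<le> 9 \<Longrightarrow> transpose (P i) = P i"
  using cs unfolding clifford_system_def by blast

lemma Psq: "i \<le> 9 \<Longrightarrow> P i ** P i = mat 1"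
  using cs unfolding clifford_system_def by blast

lemma Psq2: "i \<le> 9 \<Longrightarrow> P i ** (P i ** M) = M"
  by (simp add: matrix_mul_assoc Psq)

lemma Panti: "i \<le> 9 \<Longrightarrow> j \<le> 9 \<Longrightarrow> i \<noteq> j \<Longrightarrow> P i ** P j = - (P j ** P i)"
  using cs unfolding clifford_system_def by blast

lemma Panti2: "i \<le> 9 \<Longrightarrow> j \<le> 9 \<Longrightarrow> i \<noteq> j \<Longrightarrow> P i ** (P j ** M) = - (P j ** (P i ** M))"
  by (simp add: matrix_mul_assoc Panti[of i j] mm_neg_left)

lemma P_wp: "i \<le> 9 \<Longrightarrow> set w \<subseteq> {..9} \<Longrightarrow> P i ** wp P w = sc i w *\<^sub>R (wp P w ** P i)"
proof (induction w)
  case Nil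
  then show ?case by (simp add: sc_def)
next
  case (Cons j w)
  then have j: "j \<le> 9" and IH: "P i ** wp P w = sc i w *\<^sub>R (wp P w ** P i)" by auto
  show ?case
  proof (cases "j = i")
    case True
    have "wp P w ** P i = sc i w *\<^sub>R (P i ** wp P w)"
      using IH sc_sq[of i w] by (simp add: scaleR_scaleR)
    then have "P i ** (wp P w ** P i) = sc i w *\<^sub>R wp P w"
      using Cons.prems by (simp add: mm_scaleR_right Psq2)
    then show ?thesis using True Cons.prems sc_sq[of i w]
      by (simp add: sc_def scaleR_scaleR Psq2 mass)
  next
    case False
    have "P i ** wp P (j # w) = - (P j ** (P i ** wp P w))"
      using Panti2[of i j] False j Cons.prems by simp
    also have "\<dots> = ((-1) * sc i w) *\<^sub>R (wp P (j # w) ** P i)"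
      using IH by (simp add: mnorm)
    also have "(-1) * sc i w = sc i (j # w)" using False by (simp add: sc_def)
    finally show ?thesis .
  qed
qed


lemma trace_wp0:
  assumes "i \<le> 9" "set w \<subseteq> {..9}" "odd (length (filter (\<lambda>j. j \<noteq> i) w))"
  shows "trace (wp P w) = 0"
proof -
  have s: "sc i w = -1" using assms(3) by (simp add: sc_def)
  have "trace (wp P w) = trace ((wp P w ** P i) ** P i)"
    using assms(1) by (simp add: mass Psq)
  also have "\<dots> = trace (P i ** (wp P w ** P i))" by (rule trace_mul_sym)
  also have "wp P w ** P i = - (P i ** wp P w)"
    using P_wp[OF assms(1,2)] s by (simp add: scaleR_minus1_left)
  also have "trace (P i ** - (P i ** wp P w)) = - trace (wp P w)"
    using assms(1) by (simp add: mm_neg_right Psq2 trace_neg)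
  finally show ?thesis by simp
qed

lemma wp_commute: "set u \<subseteq> {..9} \<Longrightarrow> set v \<subseteq> {..9} \<Longrightarrow>
   wp P u ** wp P v = tau u v *\<^sub>R (wp P v ** wp P u)"
proof (induction u)
  case Nil then show ?case by (simp add: tau_def)
next
  case (Cons i u)
  then have i: "i \<le> 9" and IH: "wp P u ** wp P v = tau u v *\<^sub>R (wp P v ** wp P u)" by auto
  have "wp P (i # u) ** wp P v = P i ** (wp P u ** wp P v)" by (simp add: mass)
  also have "\<dots> = tau u v *\<^sub>R ((P i ** wp P v) ** wp P u)" using IH by (simp add: mnorm)
  also have "\<dots> = (tau u v * sc i v) *\<^sub>R (wp P v ** wp P (i # u))"
    using P_wp[OF i Cons.prems(2)] by (simp add: mnorm)
  finally show ?case by (simp add: tau_def mult.commute)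
qed

lemma wp_transpose: "set w \<subseteq> {..9} \<Longrightarrow> transpose (wp P w) = wp P (rev w)"
  by (induction w) (simp_all add: matrix_transpose_mul Psym wp_append)

lemma wp_rev: "set w \<subseteq> {..9} \<Longrightarrow> wp P (rev w) = sig w *\<^sub>R wp P w"
proof (induction w)
  case Nil then show ?case by simp
next
  case (Cons i w)
  then have i: "i \<le> 9" and w: "set w \<subseteq> {..9}" by auto
  have "wp P (rev (i # w)) = wp P (rev w) ** P i" by (simp add: wp_append)
  also have "\<dots> = sig w *\<^sub>R (wp P w ** P i)" using Cons.IH w by (simp add: mnorm)
  also have "wp P w ** P i = sc i w *\<^sub>R wp P (i # w)"
    using P_wp[OF i w] sc_sq[of i w] by (simp add: scaleR_scaleR)
  finally show ?case by (simp add: scaleR_scaleR)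
qed

lemma wp_rev_mul: "set w \<subseteq> {..9} \<Longrightarrow> wp P (rev w) ** wp P w = mat 1"
proof (induction w)
  case Nil then show ?case by simp
next
  case (Cons i w)
  then have "wp P (rev (i # w)) ** wp P (i # w) = wp P (rev w) ** (P i ** (P i ** wp P w))"
    by (simp add: wp_append mass)
  then show ?case using Cons by (simp add: Psq2)
qed

lemma wp_sq: "set w \<subseteq> {..9} \<Longrightarrow> sig w = 1 \<Longrightarrow> wp P w ** wp P w = mat 1"
  using wp_rev[of w] wp_rev_mul[of w] by simp

lemma wp_sym: "set w \<subseteq> {..9} \<Longrightarrow> sig w = 1 \<Longrightarrow> transpose (wp P w) = wp P w"
  using wp_rev[of w] wp_transpose[of w] by simp


lemma trace_Prd: "AG qs w \<Longrightarrow> trace (Prd P qs ** wp P w) = Tr qs w"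
proof (induction qs arbitrary: w)
  case Nil
  show ?case
  proof (cases "w = []")
    case True then show ?thesis by (simp add: c32)
  next
    case False
    have "\<exists>i\<in>set [0,1,2,3,4,5,6,7,8,9::nat]. odd (length (filter (\<lambda>j. j \<noteq> i) w))"
      and w: "set w \<subseteq> {..9}"
      using Nil False unfolding AG.simps good_def list_ex_iff by blast+
    then obtain i where "i \<in> set [0,1,2,3,4,5,6,7,8,9::nat]"
        "odd (length (filter (\<lambda>j. j \<noteq> i) w))" by blast
    then have "i \<le> 9" by auto
    with False show ?thesis using trace_wp0[of i w] \<open>odd _\<close> w by simp
  qed
next
  case (Cons q qs)
  have "trace (Prd P (q # qs) ** wp P w) =
     (1/2) * (trace (Prd P qs ** wp P w) + trace (wp P q ** (Prd P qs ** wp P w)))"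
    by (simp add: Ep_def mm_scaleR_left matrix_add_rdistrib trace_scaleR trace_add mass)
  also have "trace (wp P q ** (Prd P qs ** wp P w)) = trace (Prd P qs ** wp P (w @ q))"
    by (simp add: trace_mul_sym[of "wp P q"] wp_append mass)
  finally show ?case using Cons by simp
qed

lemma comm_E: "X ** wp P q = wp P q ** X \<Longrightarrow> X ** Ep P q = Ep P q ** X"
  by (simp add: Ep_def mm_scaleR_left mm_scaleR_right matrix_add_ldistrib matrix_add_rdistrib)

lemma comm_Prd: "(\<forall>q\<in>set qs. X ** wp P q = wp P q ** X) \<Longrightarrow> X ** Prd P qs = Prd P qs ** X"
proof (induction qs)
  case Nil then show ?case by simp
next
  case (Cons q qs)
  then have "X ** Ep P q = Ep P q ** X" "X ** Prd P qs = Prd P qs ** X" using comm_E by auto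
  then show ?case by (simp add: matrix_mul_assoc) (metis matrix_mul_assoc)
qed

lemma E_props: "set q \<subseteq> {..9} \<Longrightarrow> sig q = 1 \<Longrightarrow>
  transpose (Ep P q) = Ep P q \<and> Ep P q ** Ep P q = Ep P q"
  using wp_sq[of q] wp_sym[of q]
  by (simp add: Ep_def transpose_scalar transpose_add mm_scaleR_left mm_scaleR_right
      matrix_add_ldistrib matrix_add_rdistrib scaleR_add_right vec_eq_iff)

lemma Prd_props:
  assumes "\<forall>q\<in>set qs. set q \<subseteq> {..9} \<and> sig q = 1"
    and "\<forall>q\<in>set qs. \<forall>q'\<in>set qs. wp P q ** wp P q' = wp P q' ** wp P q"
  shows "transpose (Prd P qs) = Prd P qs \<and> Prd P qs ** Prd P qs = Prd P qs"
  using assms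
proof (induction qs)
  case Nil then show ?case by simp
next
  case (Cons q qs)
  have E: "transpose (Ep P q) = Ep P q" "Ep P q ** Ep P q = Ep P q"
    using E_props[of q] Cons.prems by auto
  have IH: "transpose (Prd P qs) = Prd P qs" "Prd P qs ** Prd P qs = Prd P qs"
    using Cons by auto
  have "wp P q ** Prd P qs = Prd P qs ** wp P q"
    using comm_Prd[of qs "wp P q"] Cons.prems(2) by auto
  then have C: "Ep P q ** Prd P qs = Prd P qs ** Ep P q"
    by (simp add: Ep_def mm_scaleR_left mm_scaleR_right matrix_add_ldistrib matrix_add_rdistrib)
  have "transpose (Prd P (q # qs)) = Prd P qs ** Ep P q"
    using E IH by (simp add: matrix_transpose_mul)
  also have "\<dots> = Prd P (q # qs)" using C by simp
  finally have 1: "transpose (Prd P (q # qs)) = Prd P (q # qs)" .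
  have "Prd P (q # qs) ** Prd P (q # qs) = Ep P q ** ((Prd P qs ** Ep P q) ** Prd P qs)"
    by (simp add: matrix_mul_assoc)
  also have "\<dots> = Ep P q ** ((Ep P q ** Prd P qs) ** Prd P qs)" using C by simp
  also have "\<dots> = (Ep P q ** Ep P q) ** (Prd P qs ** Prd P qs)"
    by (simp add: matrix_mul_assoc)
  also have "\<dots> = Prd P (q # qs)" using E IH by simp
  finally show ?case using 1 by simp
qed


lemma trace_PP: "i \<le> 9 \<Longrightarrow> j \<le> 9 \<Longrightarrow> trace (P j ** P i) = (if i = j then 32 else 0)"
proof (cases "i = j")
  case True
  assume "j \<le> 9" then show ?thesis using True by (simp add: Psq c32)
next
  case False
  assume "i \<le> 9" "j \<le> 9"
  then have "trace (wp P [j, i]) = 0" using False by (intro trace_wp0[of j]) auto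
  then show ?thesis using False by simp
qed

lemma coeff_zero:
  assumes "(\<Sum>i\<le>9. c i *\<^sub>R P i) = 0" "j \<le> 9"
  shows "c j = 0"
proof -
  have "0 = trace (P j ** (\<Sum>i\<le>9. c i *\<^sub>R P i))" using assms(1) by (simp add: trace_0[simplified])
  also have "\<dots> = (\<Sum>i\<le>9. c i * trace (P j ** P i))"
    by (simp add: matrix_sum_ldistrib trace_sum mm_scaleR_right trace_scaleR)
  also have "\<dots> = (\<Sum>i\<le>9. (if i = j then 32 * c j else 0))"
    by (rule sum.cong) (auto simp: trace_PP assms(2))
  also have "\<dots> = 32 * c j" using assms(2) by simp
  finally show ?thesis by simp
qed

lemma commute_P:
  assumes oA: "orthogonal_matrix A"
    and hx: "\<forall>x\<in>sphere 0 1. clifford_map 9 P (A *v x) = clifford_map 9 P x"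
    and j: "j \<le> 9"
  shows "P j ** A = A ** P j"
proof -
  have unit: "(P j *v (A *v x)) \<bullet> (A *v x) = (P j *v x) \<bullet> x" if "norm x = 1" for x
  proof -
    have "clifford_map 9 P (A *v x) - clifford_map 9 P x = 0" using hx that by simp
    then have "(\<Sum>i\<le>9. ((P i *v (A *v x)) \<bullet> (A *v x) - (P i *v x) \<bullet> x) *\<^sub>R P i) = 0"
      by (simp add: clifford_map_def scaleR_diff_left sum_subtractf)
    from coeff_zero[OF this j] show ?thesis by simp
  qed
  have all: "(P j *v (A *v x)) \<bullet> (A *v x) = (P j *v x) \<bullet> x" for x
  proof (cases "x = 0")
    case True then show ?thesis by simp
  next
    case False
    define u where "u = (1 / norm x) *\<^sub>R x"
    have nu: "norm u = 1" using False by (simp add: u_def)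
    have xu: "x = norm x *\<^sub>R u" using False by (simp add: u_def)
    have "(P j *v (A *v (norm x *\<^sub>R u))) \<bullet> (A *v (norm x *\<^sub>R u)) =
          (norm x * norm x) * ((P j *v (A *v u)) \<bullet> (A *v u))"
      by (simp add: matrix_vector_mult_scaleR)
    also have "\<dots> = (norm x * norm x) * ((P j *v u) \<bullet> u)" using unit[OF nu] by simp
    also have "\<dots> = (P j *v (norm x *\<^sub>R u)) \<bullet> (norm x *\<^sub>R u)"
      by (simp add: matrix_vector_mult_scaleR)
    finally show ?thesis using xu by metis
  qed
  define M where "M = transpose A ** P j ** A - P j"
  have Msym: "transpose M = M"
    using j by (simp add: M_def transpose_diff matrix_transpose_mul Psym mass)
  have Mq: "(M *v x) \<bullet> x = 0" for x
  proof -
    have "(M *v x) \<bullet> x = ((transpose A ** P j ** A) *v x) \<bullet> x - (P j *v x) \<bullet> x"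
      by (simp add: M_def matrix_vector_mult_diff_rdistrib inner_diff_left)
    also have "((transpose A ** P j ** A) *v x) \<bullet> x = (P j *v (A *v x)) \<bullet> (A *v x)"
      by (simp only: matrix_vector_mul_assoc[symmetric] inner_mat_left[of "transpose A"] transpose_transpose)
    finally show ?thesis using all by simp
  qed
  have "M = 0" by (rule quad_zero[OF Msym Mq])
  then have e: "transpose A ** P j ** A = P j" by (simp add: M_def)
  have "P j ** A = (A ** transpose A) ** P j ** A"
    using oA by (simp add: orthogonal_matrix_def)
  also have "\<dots> = A ** (transpose A ** P j ** A)" by (simp add: mass)
  finally show ?thesis using e by simp
qed

lemma commute_wp: "(\<forall>j\<le>9. P j ** A = A ** P j) \<Longrightarrow> set w \<subseteq> {..9} \<Longrightarrow> A ** wp P w = wp P w ** A"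
proof (induction w)
  case (Cons i w)
  then have i: "P i ** A = A ** P i" and IH: "A ** wp P w = wp P w ** A" by auto
  have "A ** wp P (i # w) = (A ** P i) ** wp P w" by (simp add: matrix_mul_assoc)
  also have "\<dots> = P i ** (A ** wp P w)" using i by (simp add: matrix_mul_assoc)
  also have "\<dots> = wp P (i # w) ** A" using IH by (simp add: matrix_mul_assoc)
  finally show ?case .
qed simp


lemma conjP: "j \<le> 9 \<Longrightarrow> (B *v (P j *v z)) \<bullet> (P j *v z) = ((P j ** B ** P j) *v z) \<bullet> z"
  by (simp add: inner_mat_left[of "P j"] Psym matrix_vector_mul_assoc inner_commute matrix_mul_assoc)

lemma symP: "i \<le> 9 \<Longrightarrow> (P i *v a) \<bullet> b = a \<bullet> (P i *v b)"
  using inner_mat_left[of "P i" a b] Psym[of i] by simp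

lemma normP: "i \<le> 9 \<Longrightarrow> (P i *v z) \<bullet> (P i *v w) = z \<bullet> w"
  by (simp add: inner_mat_left[of "P i"] Psym matrix_vector_mul_assoc Psq)

lemma zeroP:
  assumes "i \<le> 9" "i \<noteq> 0" "P 0 *v x = x"
  shows "(P i *v x) \<bullet> x = 0"
proof -
  have "(P i *v x) \<bullet> x = ((P i ** P 0) *v x) \<bullet> x"
    using assms(3) by (simp add: matrix_vector_mul_assoc[symmetric])
  also have "\<dots> = - (((P 0 ** P i) *v x) \<bullet> x)"
    using Panti[of i 0] assms by (simp add: mv_neg)
  finally have 1: "(P i *v x) \<bullet> x = - (((P 0 ** P i) *v x) \<bullet> x)" .
  have 2: "((P 0 ** P i) *v x) \<bullet> x = (P i *v x) \<bullet> (P 0 *v x)"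
    by (simp add: matrix_vector_mul_assoc[symmetric] inner_mat_left[of "P 0"] Psym)
  from 1 2 show ?thesis using assms(3) by simp
qed

lemma P1iP1: "i \<le> 9 \<Longrightarrow> j \<le> 9 \<Longrightarrow> P j ** P i ** P j = (if i = j then P i else - P i)"
proof (cases "i = j")
  case True
  assume "j \<le> 9" then show ?thesis using True by (simp add: mass Psq)
next
  case False
  assume "i \<le> 9" "j \<le> 9"
  then have "P j ** P i ** P j = - (P i ** (P j ** P j))"
    using Panti[of j i] False by (simp add: mass mm_neg_left)
  then show ?thesis using False \<open>j \<le> 9\<close> by (simp add: Psq)
qed


lemma main_false:
  assumes HO: "H \<subseteq> {Q. orthogonal_matrix Q}"
    and orb: "\<forall>x\<in>sphere 0 1. (\<lambda>A. A *v x) ` H = clifford_leaf 9 P x"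
  shows False
proof -
  define Q where "Q = Prd P qs0"
  have comm: "\<forall>q\<in>set qs0. \<forall>q'\<in>set qs0. wp P q ** wp P q' = wp P q' ** wp P q"
  proof (intro ballI)
    fix q q' assume q: "q \<in> set qs0" and q': "q' \<in> set qs0"
    then have "tau q q' = 1" "set q \<subseteq> {..9}" "set q' \<subseteq> {..9}" using qs0_sig qs0_tau by auto
    then show "wp P q ** wp P q' = wp P q' ** wp P q" using wp_commute[of q q'] by simp
  qed
  have Qp: "transpose Q = Q" "Q ** Q = Q" using Prd_props[OF qs0_sig comm] by (auto simp: Q_def)
  have trQ: "trace Q = 1" using trace_Prd[OF qs0_AG] qs0_Tr by (simp add: Q_def)
  have P0Q: "P 0 ** Q = Q"
  proof -
    have "P 0 ** Ep P [0] = Ep P [0]"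
      by (simp add: Ep_def matrix_add_ldistrib mm_scaleR_right Psq add.commute)
    then show ?thesis by (simp add: Q_def qs0_def matrix_mul_assoc)
  qed
  have HQ: "A ** Q = Q ** A" if "A \<in> H" for A
  proof -
    have oA: "orthogonal_matrix A" using HO that by auto
    have hx: "\<forall>x\<in>sphere 0 1. clifford_map 9 P (A *v x) = clifford_map 9 P x"
    proof
      fix x :: "real^32" assume "x \<in> sphere 0 1"
      then have "A *v x \<in> clifford_leaf 9 P x" using orb that by blast
      then show "clifford_map 9 P (A *v x) = clifford_map 9 P x" by (simp add: clifford_leaf_def)
    qed
    have "\<forall>j\<le>9. P j ** A = A ** P j" using commute_P[OF oA hx] by blast
    then have "\<forall>q\<in>set qs0. A ** wp P q = wp P q ** A" using qs0_sig commute_wp by blast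
    then show ?thesis unfolding Q_def by (rule comm_Prd)
  qed
  obtain k where k: "Q$k$k \<noteq> 0"
  proof (rule ccontr)
    assume "\<not> thesis"
    then have "\<forall>k. Q$k$k = 0" using that by blast
    then have "trace Q = 0" by (simp add: trace_def)
    then show False using trQ by simp
  qed
  define v where "v = Q *v axis k 1"
  have "v$k = Q$k$k" by (simp add: v_def matrix_vector_mul_component inner_axis)
  then have v0: "v \<noteq> 0" using k by auto
  define x where "x = (1 / norm v) *\<^sub>R v"
  have nx: "x \<bullet> x = 1" using v0 by (simp add: x_def dot_square_norm power2_eq_square)
  have Qx: "Q *v x = x"
  proof -
    have "Q *v v = v" by (simp add: v_def matrix_vector_mul_assoc Qp)
    then show ?thesis by (simp add: x_def matrix_vector_mult_scaleR)
  qed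
  have P0x: "P 0 *v x = x"
  proof -
    have "P 0 *v x = P 0 *v (Q *v x)" using Qx by simp
    also have "\<dots> = (P 0 ** Q) *v x" by (rule matrix_vector_mul_assoc)
    also have "\<dots> = x" using P0Q Qx by simp
    finally show ?thesis .
  qed
  define y where "y = P 1 *v (P 2 *v x)"
  have ny: "y \<bullet> y = 1" using nx by (simp add: y_def normP)
  have xy: "x \<bullet> y = 0"
  proof -
    have "(P 1 *v x) \<bullet> (P 2 *v x) = x \<bullet> (transpose (P 1) *v (P 2 *v x))"
      by (rule inner_mat_left)
    moreover have "transpose (P 1) = P 1" using Psym[of 1] by simp
    ultimately have "x \<bullet> y = (P 1 *v x) \<bullet> (P 2 *v x)"
      by (metis y_def)
    also have "\<dots> = (P 2 *v x) \<bullet> (P 1 *v x)" by (rule inner_commute)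
    also have "\<dots> = x \<bullet> (P 2 *v (P 1 *v x))" by (rule symP) simp
    also have "\<dots> = x \<bullet> ((P 2 ** P 1) *v x)" by (simp only: matrix_vector_mul_assoc)
    also have "\<dots> = - (x \<bullet> ((P 1 ** P 2) *v x))"
      using Panti[of 2 1] by (simp add: mv_neg)
    also have "x \<bullet> ((P 1 ** P 2) *v x) = x \<bullet> y"
      by (simp add: y_def matrix_vector_mul_assoc)
    finally show ?thesis by simp
  qed
  have yleaf: "y \<in> clifford_leaf 9 P x"
  proof -
    have "(P i *v y) \<bullet> y = (P i *v x) \<bullet> x" if i: "i \<le> 9" for i
    proof -
      have "(P i *v y) \<bullet> y = ((P 1 ** P i ** P 1) *v (P 2 *v x)) \<bullet> (P 2 *v x)"
        by (simp add: y_def conjP)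
      also have "\<dots> = ((P 2 ** (P 1 ** P i ** P 1) ** P 2) *v x) \<bullet> x"
        by (simp add: conjP)
      also have "\<dots> = (P i *v x) \<bullet> x"
      proof (cases "i = 1 \<or> i = 2")
        case True
        have z: "(P i *v x) \<bullet> x = 0" using zeroP[OF i _ P0x] True by auto
        show ?thesis
        proof (cases "i = 1")
          case True
          then show ?thesis using z P1iP1[of 1 2] P1iP1[of 1 1]
            by (simp add: mm_neg_left mm_neg_right mv_neg)
        next
          case False
          then have "i = 2" using True by auto
          then show ?thesis using z P1iP1[of 2 2] P1iP1[of 2 1]
            by (simp add: mm_neg_left mm_neg_right mv_neg)
        qed
      next
        case False
        then show ?thesis using P1iP1[of i 2] P1iP1[of i 1] i
          by (simp add: mm_neg_left mm_neg_right)
      qed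
      finally show ?thesis .
    qed
    then have "clifford_map 9 P y = clifford_map 9 P x"
      unfolding clifford_map_def by (intro sum.cong) auto
    moreover have "y \<in> sphere 0 1" using ny by (simp add: norm_eq_1)
    ultimately show ?thesis by (simp add: clifford_leaf_def)
  qed
  have xs: "x \<in> sphere 0 1" using nx by (simp add: norm_eq_1)
  then obtain A where A: "A \<in> H" "y = A *v x" using orb yleaf by (metis imageE)
  have Qy: "Q *v y = y"
  proof -
    have "Q *v y = (Q ** A) *v x" using A by (simp add: matrix_vector_mul_assoc)
    also have "\<dots> = A *v (Q *v x)" using HQ[OF A(1)] by (simp add: matrix_vector_mul_assoc)
    finally show ?thesis using Qx A by simp
  qed
  have "2 \<le> trace Q" using trace_ge2[OF Qp Qx Qy nx ny xy] .
  then show False using trQ by simp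
qed

end

theorem proposition5p3:
  fixes P :: "nat \<Rightarrow> real^32^32"
  assumes "clifford_system 9 P"
  shows "\<not> homogeneous_foliation (clifford_leaf 9 P)"
proof
  interpret cs P using assms by (rule cs.intro)
  assume "homogeneous_foliation (clifford_leaf 9 P)"
  then obtain H where "H \<subseteq> {Q. orthogonal_matrix Q}"
    "\<forall>x\<in>sphere 0 1. (\<lambda>A. A *v x) ` H = clifford_leaf 9 P x"
    unfolding homogeneous_foliation_def by blast
  then show False using main_false by blast
qed

end
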